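(* Let $m\in\mathbb R$ satisfy $D^-M(m)\le 0\le D^+M(m)$ (i.e. $m$ is a minimizer of $M$), and assume the boundedness condition (B) holds. Then for every $n\in\mathbb N$: \begin{align*} &\mathbb P\Big(\sup_{k\ge n}(\hat m_k-m)>x\Big)\le \exp\{-2(b(x)-a(x))^{-2}\,n\,D^+M(m+x)^2\}\quad\forall x>0,\\ &\mathbb P\Big(\inf_{k\ge n}(\hat m_k-m)<-x\Big)\le \exp\{-2(b(-x)-a(-x))^{-2}\,n\,D^+M(m-x)^2\}\quad\forall x>0,\\ &\mathbb P\Big(\sup_{k\ge n}|\hat m_k-m|>x\Big)\le 2\exp\{-2A(x)^{-2}\,n\,d(x)^2\}\quad\forall x>0, \end{align*} where $A(x):=\max\{b(x)-a(x),\,b(-x)-a(-x)\}$ and $d(x):=\min\{D^+M(m+x),\,-D^+M(m-x)\}\ge 0$. Moreover, if $m$ is the unique minimizing point of $M$, then $d(x)>0$ for every $x>0$ (and also $D^+M(m+x)>0$ and $-D^+M(m-x)>0$ for all $x>0$), so that each of the three bounds decays exponentially fast in $n$.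
   Context: Let $(S,\mathcal S,Q)$ be a probability space and $h:S\times\mathbb R\to\mathbb R$ such that $h(\cdot,t)$ is $\mathcal S$-measurable for every $t\in\mathbb R$ and $h(x,\cdot)$ is convex for every $x\in S$. For $f:\mathbb R\to\mathbb R$ convex, $D^+f$ and $D^-f$ denote its right and left derivatives; $D^\pm h(x,t)$ denotes the one-sided derivatives of $h(x,\cdot)$ at $t$. Assume $\int_S|D^+h(x,t)|\,Q(dx)<\infty$ and $\int_S|D^-h(x,t)|\,Q(dx)<\infty$ for all $t\in\mathbb R$. Fix $t_0\in\mathbb R$ and set $M(t):=\int_S (h(x,t)-h(x,t_0))\,Q(dx)$; $M$ is real-valued and convex with $D^\pm M(t)=\int_S D^\pm h(x,t)\,Q(dx)$. Let $X_1,X_2,\dots$ be i.i.d. $S$-valued random variables on a probability space $(\Omega,\mathcal A,\mathbb P)$ with common law $Q$, let $M_n(t):=\frac1n\sum_{i=1}^n (h(X_i,t)-h(X_i,t_0))$, and let $\hat m_n$ be the smallest minimizing point of $M_n$ (assumed to exist; it is a random variable). Boundedness condition (B): for every $x\neq 0$ there are reals $a(x)<b(x)$ with $a(x)\le D^+h(X_1,m+x)\le b(x)$ almost surely. *)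

theory Defs
  imports "HOL-Probability.Probability"
begin

definition right_deriv :: "(real \<Rightarrow> real) \<Rightarrow> real \<Rightarrow> real" where
  "right_deriv f t = Lim (at_right t) (\<lambda>y. (f y - f t) / (y - t))"

definition left_deriv :: "(real \<Rightarrow> real) \<Rightarrow> real \<Rightarrow> real" where
  "left_deriv f t = Lim (at_left t) (\<lambda>y. (f y - f t) / (y - t))"

definition pop_M :: "'a measure \<Rightarrow> ('a \<Rightarrow> real \<Rightarrow> real) \<Rightarrow> real \<Rightarrow> real \<Rightarrow> real" where
  "pop_M Q h t0 t = (\<integral>x. (h x t - h x t0) \<partial>Q)"

text \<open>Empirical criterion M_n(t) = (1/n) sum_{i=1}^n (h(X_i,t) - h(X_i,t0));
  the sample X_1,...,X_n is X 0, ..., X (n-1).\<close>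
definition emp_M :: "(nat \<Rightarrow> 'b \<Rightarrow> 'a) \<Rightarrow> ('a \<Rightarrow> real \<Rightarrow> real) \<Rightarrow> real \<Rightarrow> nat \<Rightarrow> 'b \<Rightarrow> real \<Rightarrow> real" where
  "emp_M X h t0 n \<omega> t = (\<Sum>i<n. h (X i \<omega>) t - h (X i \<omega>) t0) / real n"

definition smallest_minimizer :: "(real \<Rightarrow> real) \<Rightarrow> real \<Rightarrow> bool" where
  "smallest_minimizer f x \<longleftrightarrow> (\<forall>y. f x \<le> f y) \<and> (\<forall>y. (\<forall>z. f y \<le> f z) \<longrightarrow> x \<le> y)"

end

theory Submission
  imports Defs
begin


lemma slope3:
  fixes f :: "real \<Rightarrow> real"
  assumes f: "convex_on UNIV f" and "x < t" "t < y"
  shows "(f t - f x) / (t - x) \<le> (f y - f x) / (y - x)"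
    and "(f y - f x) / (y - x) \<le> (f y - f t) / (y - t)"
proof -
  have 1: "(f x - f t) / (x - t) \<le> (f x - f y) / (x - y)"
   and 2: "(f x - f y) / (x - y) \<le> (f t - f y) / (t - y)"
    using convex_on_slope_le[OF f _ _ assms(2,3)] by auto
  have e1: "(f x - f t) / (x - t) = (f t - f x) / (t - x)" 
    by (metis minus_diff_eq minus_divide_divide)
  have e2: "(f x - f y) / (x - y) = (f y - f x) / (y - x)"
    by (metis minus_diff_eq minus_divide_divide)
  have e3: "(f t - f y) / (t - y) = (f y - f t) / (y - t)"
    by (metis minus_diff_eq minus_divide_divide)
  show "(f t - f x) / (t - x) \<le> (f y - f x) / (y - x)" using 1 e1 e2 by simp
  show "(f y - f x) / (y - x) \<le> (f y - f t) / (y - t)" using 2 e2 e3 by simp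
qed

lemma slope_mono:
  fixes f :: "real \<Rightarrow> real"
  assumes f: "convex_on UNIV f" and "x < y" "u < v" "x \<le> u" "y \<le> v"
  shows "(f y - f x) / (y - x) \<le> (f v - f u) / (v - u)"
proof -
  have a: "(f y - f x) / (y - x) \<le> (f v - f x) / (v - x)"
    using slope3(1)[OF f, of x y v] assms by (cases "y = v") auto
  have b: "(f v - f x) / (v - x) \<le> (f v - f u) / (v - u)"
    using slope3(2)[OF f, of x u v] assms by (cases "x = u") auto
  show ?thesis using a b by linarith
qed

lemma right_deriv_tendsto:
  fixes f :: "real \<Rightarrow> real"
  assumes f: "convex_on UNIV f"
  shows "((\<lambda>y. (f y - f t) / (y - t)) \<longlongrightarrow> right_deriv f t) (at_right t)"
proof -
  define S where "S = (\<lambda>y. (f y - f t) / (y - t)) ` {t<..}"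
  define R where "R = Inf S"
  have lb: "f t - f (t-1) \<le> s" if "s \<in> S" for s
    using that slope_mono[OF f, of "t-1" t t] unfolding S_def by auto
  have bdd: "bdd_below S" by (rule bdd_belowI[OF lb])
  have ne: "S \<noteq> {}" unfolding S_def by auto
  have Rle: "R \<le> (f y - f t) / (y - t)" if "t < y" for y
    unfolding R_def by (rule cInf_lower[OF _ bdd]) (use that in \<open>auto simp: S_def\<close>)
  have lim: "((\<lambda>y. (f y - f t) / (y - t)) \<longlongrightarrow> R) (at_right t)"
  proof (rule tendstoI)
    fix e :: real assume e: "e > 0"
    have "Inf S < R + e" using e R_def by simp
    then obtain s where "s \<in> S" "s < R + e" using cInf_lessD[OF ne] by blast
    then obtain y0 where y0: "t < y0" "(f y0 - f t) / (y0 - t) < R + e" unfolding S_def by auto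
    have "eventually (\<lambda>y. y \<in> {t<..<y0}) (at_right t)"
      by (rule eventually_at_right_real[OF y0(1)])
    then show "eventually (\<lambda>y. dist ((f y - f t) / (y - t)) R < e) (at_right t)"
    proof eventually_elim
      case (elim y)
      then have "(f y - f t) / (y - t) \<le> (f y0 - f t) / (y0 - t)"
        using slope_mono[OF f, of t y t y0] by auto
      moreover have "R \<le> (f y - f t) / (y - t)" using Rle elim by auto
      ultimately show ?case using y0 by (auto simp: dist_real_def)
    qed
  qed
  have "right_deriv f t = R"
    unfolding right_deriv_def by (rule tendsto_Lim[OF _ lim]) simp
  then show ?thesis using lim by simp
qed

lemma left_deriv_tendsto:
  fixes f :: "real \<Rightarrow> real"
  assumes f: "convex_on UNIV f"
  shows "((\<lambda>y. (f y - f t) / (y - t)) \<longlongrightarrow> left_deriv f t) (at_left t)"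
proof -
  define S where "S = (\<lambda>y. (f y - f t) / (y - t)) ` {..<t}"
  define R where "R = Sup S"
  have eq: "(f y - f t) / (y - t) = (f t - f y) / (t - y)" for y
    by (metis minus_diff_eq minus_divide_divide)
  have ub: "s \<le> f (t+1) - f t" if "s \<in> S" for s
    using that slope_mono[OF f, of _ t t "t+1"] unfolding S_def by (auto simp: eq)
  have bdd: "bdd_above S" by (rule bdd_aboveI[OF ub])
  have ne: "S \<noteq> {}" unfolding S_def by auto
  have Rle: "(f y - f t) / (y - t) \<le> R" if "y < t" for y
    unfolding R_def by (rule cSup_upper[OF _ bdd]) (use that in \<open>auto simp: S_def\<close>)
  have lim: "((\<lambda>y. (f y - f t) / (y - t)) \<longlongrightarrow> R) (at_left t)"
  proof (rule tendstoI)
    fix e :: real assume e: "e > 0"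
    have "R - e < Sup S" using e R_def by simp
    then obtain s where "s \<in> S" "R - e < s" using less_cSupD[OF ne] by blast
    then obtain y0 where y0: "y0 < t" "R - e < (f y0 - f t) / (y0 - t)" unfolding S_def by auto
    have "eventually (\<lambda>y. y \<in> {y0<..<t}) (at_left t)"
      by (rule eventually_at_left_real[OF y0(1)])
    then show "eventually (\<lambda>y. dist ((f y - f t) / (y - t)) R < e) (at_left t)"
    proof eventually_elim
      case (elim y)
      then have "(f t - f y0) / (t - y0) \<le> (f t - f y) / (t - y)"
        using slope_mono[OF f, of y0 t y t] by auto
      moreover have "(f y - f t) / (y - t) \<le> R" using Rle elim by auto
      ultimately show ?case using y0 by (auto simp: dist_real_def eq)
    qed
  qed
  have "left_deriv f t = R"
    unfolding left_deriv_def by (rule tendsto_Lim[OF _ lim]) simp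
  then show ?thesis using lim by simp
qed

lemma right_deriv_le_slope:
  fixes f :: "real \<Rightarrow> real"
  assumes f: "convex_on UNIV f" and "t < y"
  shows "right_deriv f t \<le> (f y - f t) / (y - t)"
proof (rule tendsto_upperbound[OF right_deriv_tendsto[OF f]])
  show "eventually (\<lambda>z. (f z - f t) / (z - t) \<le> (f y - f t) / (y - t)) (at_right t)"
    using eventually_at_right_real[OF assms(2)]
    by eventually_elim (use slope_mono[OF f, of t _ t y] in auto)
qed simp

lemma slope_le_right_deriv:
  fixes f :: "real \<Rightarrow> real"
  assumes f: "convex_on UNIV f" and "y < t"
  shows "(f t - f y) / (t - y) \<le> right_deriv f t"
proof (rule tendsto_lowerbound[OF right_deriv_tendsto[OF f]])
  show "eventually (\<lambda>z. (f t - f y) / (t - y) \<le> (f z - f t) / (z - t)) (at_right t)"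
    using eventually_at_right_real[of t "t+1", OF less_add_one]
    by eventually_elim (use slope_mono[OF f, of y t t] assms(2) in auto)
qed simp

lemma slope_le_left_deriv:
  fixes f :: "real \<Rightarrow> real"
  assumes f: "convex_on UNIV f" and "y < t"
  shows "(f t - f y) / (t - y) \<le> left_deriv f t"
proof (rule tendsto_lowerbound[OF left_deriv_tendsto[OF f]])
  have eq: "(f z - f t) / (z - t) = (f t - f z) / (t - z)" for z
    by (metis minus_diff_eq minus_divide_divide)
  show "eventually (\<lambda>z. (f t - f y) / (t - y) \<le> (f z - f t) / (z - t)) (at_left t)"
    using eventually_at_left_real[OF assms(2)]
    by eventually_elim (use slope_mono[OF f, of y t _ t] in \<open>auto simp: eq\<close>)
qed simp


lemma hdiff_bound:
  fixes f :: "real \<Rightarrow> real"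
  assumes f: "convex_on UNIV f"
  shows "\<bar>f t - f s\<bar> \<le> \<bar>t - s\<bar> * (\<bar>right_deriv f t\<bar> + \<bar>right_deriv f s\<bar>)"
proof (cases t s rule: linorder_cases)
  case less
  have 1: "right_deriv f t \<le> (f s - f t) / (s - t)" by (rule right_deriv_le_slope[OF f less])
  have 2: "(f s - f t) / (s - t) \<le> right_deriv f s" by (rule slope_le_right_deriv[OF f less])
  have "\<bar>(f s - f t) / (s - t)\<bar> \<le> \<bar>right_deriv f t\<bar> + \<bar>right_deriv f s\<bar>" using 1 2 by linarith
  moreover have "\<bar>f t - f s\<bar> = \<bar>t - s\<bar> * \<bar>(f s - f t) / (s - t)\<bar>"
    using less by (simp add: abs_div abs_minus_commute)
  ultimately show ?thesis by (metis abs_ge_zero mult_left_mono)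
next
  case greater
  have 1: "right_deriv f s \<le> (f t - f s) / (t - s)" by (rule right_deriv_le_slope[OF f greater])
  have 2: "(f t - f s) / (t - s) \<le> right_deriv f t" by (rule slope_le_right_deriv[OF f greater])
  have "\<bar>(f t - f s) / (t - s)\<bar> \<le> \<bar>right_deriv f t\<bar> + \<bar>right_deriv f s\<bar>" using 1 2 by linarith
  moreover have "\<bar>f t - f s\<bar> = \<bar>t - s\<bar> * \<bar>(f t - f s) / (t - s)\<bar>"
    using greater by (simp add: abs_div)
  ultimately show ?thesis by (metis abs_ge_zero mult_left_mono)
qed simp

locale cvxh =
  fixes Q :: "'a measure" and h :: "'a \<Rightarrow> real \<Rightarrow> real" and t0 :: real
  assumes h_meas: "\<And>t. (\<lambda>x. h x t) \<in> borel_measurable Q"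
    and h_convex: "\<And>x. x \<in> space Q \<Longrightarrow> convex_on UNIV (h x)"
    and int_Dp: "\<And>t. integrable Q (\<lambda>x. right_deriv (h x) t)"
begin

lemma int_hdiff: "integrable Q (\<lambda>x. h x t - h x s)"
proof (rule Bochner_Integration.integrable_bound)
  show "integrable Q (\<lambda>x. \<bar>t - s\<bar> * (\<bar>right_deriv (h x) t\<bar> + \<bar>right_deriv (h x) s\<bar>))"
    using int_Dp by auto
  show "(\<lambda>x. h x t - h x s) \<in> borel_measurable Q" using h_meas by measurable
  show "AE x in Q. norm (h x t - h x s) \<le> norm (\<bar>t - s\<bar> * (\<bar>right_deriv (h x) t\<bar> + \<bar>right_deriv (h x) s\<bar>))"
    using hdiff_bound[OF h_convex] by (auto intro!: AE_I2)
qed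

lemma M_convex: "convex_on UNIV (pop_M Q h t0)"
  unfolding convex_on_def
proof (intro conjI ballI allI impI)
  fix x y u v :: real assume uv: "0 \<le> u" "0 \<le> v" "u + v = 1"
  have "pop_M Q h t0 (u *\<^sub>R x + v *\<^sub>R y) = (\<integral>z. h z (u * x + v * y) - h z t0 \<partial>Q)"
    by (simp add: pop_M_def)
  also have "\<dots> \<le> (\<integral>z. u * (h z x - h z t0) + v * (h z y - h z t0) \<partial>Q)"
  proof (rule integral_mono)
    show "integrable Q (\<lambda>z. h z (u * x + v * y) - h z t0)" by (rule int_hdiff)
    show "integrable Q (\<lambda>z. u * (h z x - h z t0) + v * (h z y - h z t0))"
      by (intro Bochner_Integration.integrable_add integrable_mult_right int_hdiff)
    fix z assume z: "z \<in> space Q"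
    have "h z (u *\<^sub>R x + v *\<^sub>R y) \<le> u * h z x + v * h z y"
      using h_convex[OF z] uv unfolding convex_on_def by blast
    then show "h z (u * x + v * y) - h z t0 \<le> u * (h z x - h z t0) + v * (h z y - h z t0)"
    proof -
      have v: "v = 1 - u" using uv(3) by simp
      have "u * (h z x - h z t0) + v * (h z y - h z t0) = u * h z x + v * h z y - h z t0"
        unfolding v by (simp add: algebra_simps)
      then show ?thesis using \<open>h z (u *\<^sub>R x + v *\<^sub>R y) \<le> u * h z x + v * h z y\<close> by simp
    qed
  qed
  also have "\<dots> = (\<integral>z. u * (h z x - h z t0) \<partial>Q) + (\<integral>z. v * (h z y - h z t0) \<partial>Q)"
    by (intro Bochner_Integration.integral_add integrable_mult_right int_hdiff)
  also have "\<dots> = u * pop_M Q h t0 x + v * pop_M Q h t0 y"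
    unfolding pop_M_def by simp
  finally show "pop_M Q h t0 (u *\<^sub>R x + v *\<^sub>R y) \<le> u * pop_M Q h t0 x + v * pop_M Q h t0 y" .
qed simp

lemma Dp_meas: "(\<lambda>x. right_deriv (h x) t) \<in> borel_measurable Q"
  using int_Dp by auto

lemma M_rderiv: "right_deriv (pop_M Q h t0) t = (\<integral>x. right_deriv (h x) t \<partial>Q)"
proof -
  define z where "z = (\<lambda>j::nat. t + inverse (real (Suc j)))"
  have zt: "z j > t" for j by (simp add: z_def)
  have z1: "z j \<le> t + 1" for j by (simp add: z_def field_simps)
  have zlim: "z \<longlonglongrightarrow> t"
    unfolding z_def using tendsto_add[OF tendsto_const LIMSEQ_inverse_real_of_nat, of t] by simp
  have zfl: "filterlim z (at_right t) sequentially"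
    by (rule tendsto_imp_filterlim_at_right[OF zlim]) (use zt in auto)
  define q where "q = (\<lambda>j x. (h x (z j) - h x t) / (z j - t))"
  have A: "(\<lambda>j. \<integral>x. q j x \<partial>Q) \<longlonglongrightarrow> (\<integral>x. right_deriv (h x) t \<partial>Q)"
  proof (rule integral_dominated_convergence[where w="\<lambda>x. \<bar>right_deriv (h x) t\<bar> + \<bar>h x (t+1) - h x t\<bar>"])
    show "(\<lambda>x. right_deriv (h x) t) \<in> borel_measurable Q" by (rule Dp_meas)
    show "q j \<in> borel_measurable Q" for j unfolding q_def using h_meas by measurable
    show "integrable Q (\<lambda>x. \<bar>right_deriv (h x) t\<bar> + \<bar>h x (t+1) - h x t\<bar>)"
      using int_Dp int_hdiff by auto
    show "AE x in Q. (\<lambda>j. q j x) \<longlonglongrightarrow> right_deriv (h x) t"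
    proof (rule AE_I2)
      fix x assume x: "x \<in> space Q"
      show "(\<lambda>j. q j x) \<longlonglongrightarrow> right_deriv (h x) t"
        unfolding q_def using filterlim_compose[OF right_deriv_tendsto[OF h_convex[OF x]] zfl] .
    qed
    show "AE x in Q. norm (q j x) \<le> \<bar>right_deriv (h x) t\<bar> + \<bar>h x (t+1) - h x t\<bar>" for j
    proof (rule AE_I2)
      fix x assume x: "x \<in> space Q"
      have 1: "right_deriv (h x) t \<le> q j x" unfolding q_def
        by (rule right_deriv_le_slope[OF h_convex[OF x] zt])
      have 2: "q j x \<le> (h x (t+1) - h x t) / ((t+1) - t)" unfolding q_def
        using slope_mono[OF h_convex[OF x], of t "z j" t "t+1"] zt z1 by auto
      show "norm (q j x) \<le> \<bar>right_deriv (h x) t\<bar> + \<bar>h x (t+1) - h x t\<bar>"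
        using 1 2 by auto
    qed
  qed
  have eq: "(\<integral>x. q j x \<partial>Q) = (pop_M Q h t0 (z j) - pop_M Q h t0 t) / (z j - t)" for j
  proof -
    have "(\<integral>x. q j x \<partial>Q) = (\<integral>x. (h x (z j) - h x t0) - (h x t - h x t0) \<partial>Q) / (z j - t)"
      unfolding q_def by simp
    also have "\<dots> = (pop_M Q h t0 (z j) - pop_M Q h t0 t) / (z j - t)"
      unfolding pop_M_def using Bochner_Integration.integral_diff[OF int_hdiff[of "z j" t0] int_hdiff[of t t0]] by simp
    finally show ?thesis .
  qed
  have B: "(\<lambda>j. \<integral>x. q j x \<partial>Q) \<longlonglongrightarrow> right_deriv (pop_M Q h t0) t"
    unfolding eq using filterlim_compose[OF right_deriv_tendsto[OF M_convex] zfl] .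
  show ?thesis using LIMSEQ_unique[OF B A] .
qed

end


lemma (in prob_space) indep_var_nn_mult:
  fixes X Y :: "'a \<Rightarrow> real"
  assumes ind: "indep_var borel X borel Y" and nn: "\<And>\<omega>. X \<omega> \<ge> 0" "\<And>\<omega>. Y \<omega> \<ge> 0"
  shows "(\<integral>\<^sup>+\<omega>. ennreal (X \<omega> * Y \<omega>) \<partial>M) = (\<integral>\<^sup>+\<omega>. ennreal (X \<omega>) \<partial>M) * (\<integral>\<^sup>+\<omega>. ennreal (Y \<omega>) \<partial>M)"
proof -
  have "indep_var borel (ennreal \<circ> X) borel (ennreal \<circ> Y)"
    by (rule indep_var_compose[OF ind]) auto
  then have i2: "indep_vars (\<lambda>_. borel) (case_bool (ennreal \<circ> X) (ennreal \<circ> Y)) UNIV"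
    unfolding indep_var_def
    by (rule indep_vars_cong[THEN iffD1, rotated 3]) (auto split: bool.split)
  have "(\<integral>\<^sup>+\<omega>. (\<Prod>b\<in>UNIV. case_bool (ennreal \<circ> X) (ennreal \<circ> Y) b \<omega>) \<partial>M)
        = (\<Prod>b\<in>UNIV. \<integral>\<^sup>+\<omega>. case_bool (ennreal \<circ> X) (ennreal \<circ> Y) b \<omega> \<partial>M)"
    by (rule indep_vars_nn_integral[OF _ i2]) auto
  then show ?thesis using nn by (simp add: UNIV_bool ennreal_mult comp_def mult.commute)
qed


lemma t1: fixes i j :: nat assumes "i \<le> j"
  shows "(\<lambda>f::nat\<Rightarrow>real. \<Sum>k<i. f k) \<in> borel_measurable (PiM {..<j} (\<lambda>_. borel))"
proof (rule borel_measurable_sum)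
  fix k assume "k \<in> {..<i}"
  then show "(\<lambda>f::nat\<Rightarrow>real. f k) \<in> borel_measurable (PiM {..<j} (\<lambda>_. borel))"
    using measurable_component_singleton[of k "{..<j}" "\<lambda>_. borel"] assms by simp
qed


lemma (in prob_space) ville_sum:
  fixes V :: "nat \<Rightarrow> 'a \<Rightarrow> real" and l psi c :: real
  assumes indV: "indep_vars (\<lambda>_. borel) V UNIV"
    and Hl: "\<And>i. (\<integral>\<^sup>+\<omega>. ennreal (exp (l * V i \<omega> - psi)) \<partial>M) \<le> 1"
    and c: "c > 1"
  shows "c * measure M {\<omega>\<in>space M. \<exists>i. c \<le> exp (l * (\<Sum>k<i. V k \<omega>) - real i * psi)} \<le> 1"
proof -
  define Mf where "Mf i f = exp (l * (\<Sum>k<i. f k) - real i * psi)" for i and f :: "nat \<Rightarrow> real"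
  define Gf where "Gf j f = (if (\<forall>i\<in>{..j}. Mf i f < c) then Mf j f else 0)" for j f
  define E where "E j = {\<omega>\<in>space M. \<exists>i\<in>{..j}. c \<le> Mf i (\<lambda>k. V k \<omega>)}" for j
  define G where "G j \<omega> = Gf j (\<lambda>k. V k \<omega>)" for j \<omega>
  have Vm[measurable]: "V i \<in> borel_measurable M" for i
    using indV unfolding indep_vars_def by auto
  have Mf_meas_M[measurable]: "(\<lambda>\<omega>. Mf i (\<lambda>k. V k \<omega>)) \<in> borel_measurable M" for i
    unfolding Mf_def by measurable
  have E_sets[measurable]: "E j \<in> sets M" for j
    unfolding E_def by measurable
  have G_meas[measurable]: "G j \<in> borel_measurable M" for j
    unfolding G_def Gf_def by measurable
  have Mf_restr: "Mf i (restrict f {..<j}) = Mf i f" if "i \<le> j" for i j f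
    unfolding Mf_def using that by (auto intro!: sum.cong arg_cong[where f=exp])
  have Gf_restr: "Gf j (restrict f {..<j}) = Gf j f" for j f
    unfolding Gf_def using Mf_restr by auto
  have Mf_meas: "Mf i \<in> borel_measurable (PiM {..<j} (\<lambda>_. borel))" if "i \<in> {..j}" for i j
  proof -
    have "(\<lambda>f::nat\<Rightarrow>real. \<Sum>k<i. f k) \<in> borel_measurable (PiM {..<j} (\<lambda>_. borel))"
      by (rule t1) (use that in simp)
    moreover have "(\<lambda>s. exp (l * s - real i * psi)) \<in> borel_measurable borel" by measurable
    ultimately show ?thesis unfolding Mf_def by (rule measurable_compose)
  qed
  have Gf_meas: "Gf j \<in> borel_measurable (PiM {..<j} (\<lambda>_. borel))" for j
    unfolding Gf_def
  proof (rule measurable_If)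
    show "Mf j \<in> borel_measurable (PiM {..<j} (\<lambda>_. borel))" by (rule Mf_meas) simp
    show "(\<lambda>x. 0) \<in> borel_measurable (PiM {..<j} (\<lambda>_. borel))" by simp
    show "{x \<in> space (PiM {..<j} (\<lambda>_. borel)). \<forall>i\<in>{..j}. Mf i x < c} \<in> sets (PiM {..<j} (\<lambda>_. borel))"
    proof (rule sets.sets_Collect_finite_All)
      fix i assume i: "i \<in> {..j}"
      note [measurable] = Mf_meas[OF i]
      show "{x \<in> space (PiM {..<j} (\<lambda>_. borel)). Mf i x < c} \<in> sets (PiM {..<j} (\<lambda>_. borel))"
        by measurable
    qed simp
  qed
  have indGY: "indep_var borel (G j) borel (\<lambda>\<omega>. exp (l * V j \<omega> - psi))" for j
  proof -
    have r: "indep_var (PiM {..<j} (\<lambda>_. borel)) (\<lambda>\<omega>. restrict (\<lambda>i. V i \<omega>) {..<j})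
                       (PiM {j} (\<lambda>_. borel)) (\<lambda>\<omega>. restrict (\<lambda>i. V i \<omega>) {j})"
      by (rule indep_var_restrict[OF indV]) auto
    have "indep_var borel (Gf j \<circ> (\<lambda>\<omega>. restrict (\<lambda>i. V i \<omega>) {..<j}))
             borel ((\<lambda>f. exp (l * f j - psi)) \<circ> (\<lambda>\<omega>. restrict (\<lambda>i. V i \<omega>) {j}))"
      by (rule indep_var_compose[OF r Gf_meas]) measurable
    moreover have "Gf j \<circ> (\<lambda>\<omega>. restrict (\<lambda>i. V i \<omega>) {..<j}) = G j"
      unfolding G_def comp_def by (simp add: Gf_restr[of j "\<lambda>i. V i _", simplified])
    moreover have "(\<lambda>f. exp (l * f j - psi)) \<circ> (\<lambda>\<omega>. restrict (\<lambda>i. V i \<omega>) {j}) = (\<lambda>\<omega>. exp (l * V j \<omega> - psi))"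
      by (simp add: comp_def)
    ultimately show ?thesis by simp
  qed
  have Mf_Suc: "Mf (Suc j) f = Mf j f * exp (l * f j - psi)" for j f
    unfolding Mf_def by (simp add: exp_add[symmetric] algebra_simps)
  have Mf_pos: "Mf i f > 0" for i f unfolding Mf_def by simp
  have G_nn: "G j \<omega> \<ge> 0" for j \<omega> unfolding G_def Gf_def using Mf_pos by (auto simp: less_imp_le)
  define A where "A j = {\<omega>\<in>space M. (\<forall>i\<in>{..j}. Mf i (\<lambda>k. V k \<omega>) < c) \<and> c \<le> Mf (Suc j) (\<lambda>k. V k \<omega>)}" for j
  have A_sets[measurable]: "A j \<in> sets M" for j unfolding A_def by measurable
  have EA: "E (Suc j) = E j \<union> A j" for j
    unfolding E_def A_def by (auto simp: atMost_Suc not_less) 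
  have EAd: "E j \<inter> A j = {}" for j
    unfolding E_def A_def by (auto, meson atMost_iff not_le)
  have pw: "ennreal (if \<omega> \<in> A j then Mf (Suc j) (\<lambda>k. V k \<omega>) else 0) + ennreal (G (Suc j) \<omega>)
            = ennreal (G j \<omega> * exp (l * V j \<omega> - psi))" if "\<omega> \<in> space M" for j \<omega>
  proof (cases "\<forall>i\<in>{..j}. Mf i (\<lambda>k. V k \<omega>) < c")
    case True
    then show ?thesis using that
      unfolding A_def G_def Gf_def by (simp add: atMost_Suc Mf_Suc not_less)
  next
    case False
    then have "\<not> (\<forall>i\<in>{..Suc j}. Mf i (\<lambda>k. V k \<omega>) < c)" by auto
    then have g1: "G (Suc j) \<omega> = 0" unfolding G_def Gf_def by (simp only: if_not_P if_False)
    have g2: "G j \<omega> = 0" unfolding G_def Gf_def using False by (simp only: if_not_P if_False)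
    have "\<omega> \<notin> A j" using False unfolding A_def by blast
    then show ?thesis using g1 g2 by simp
  qed
  have claim: "ennreal c * emeasure M (E j) + (\<integral>\<^sup>+\<omega>. ennreal (G j \<omega>) \<partial>M) \<le> 1" for j
  proof (induction j)
    case 0
    have "E 0 = {}" unfolding E_def Mf_def using c by auto
    moreover have "G 0 \<omega> = 1" for \<omega> unfolding G_def Gf_def Mf_def using c by auto
    ultimately show ?case by (simp add: emeasure_space_1)
  next
    case (Suc j)
    have "ennreal c * emeasure M (E (Suc j)) = ennreal c * emeasure M (E j) + ennreal c * emeasure M (A j)"
      unfolding EA by (subst plus_emeasure[symmetric]) (auto simp: EAd distrib_left)
    moreover have "ennreal c * emeasure M (A j) \<le> (\<integral>\<^sup>+\<omega>. ennreal (if \<omega> \<in> A j then Mf (Suc j) (\<lambda>k. V k \<omega>) else 0) \<partial>M)"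
    proof -
      have "ennreal c * emeasure M (A j) = (\<integral>\<^sup>+\<omega>. ennreal c * indicator (A j) \<omega> \<partial>M)"
        by (simp add: nn_integral_cmult_indicator)
      also have "\<dots> \<le> (\<integral>\<^sup>+\<omega>. ennreal (if \<omega> \<in> A j then Mf (Suc j) (\<lambda>k. V k \<omega>) else 0) \<partial>M)"
        by (intro nn_integral_mono) (auto simp: A_def indicator_def intro: ennreal_leI)
      finally show ?thesis .
    qed
    moreover have "(\<integral>\<^sup>+\<omega>. ennreal (if \<omega> \<in> A j then Mf (Suc j) (\<lambda>k. V k \<omega>) else 0) \<partial>M)
                   + (\<integral>\<^sup>+\<omega>. ennreal (G (Suc j) \<omega>) \<partial>M)
                   = (\<integral>\<^sup>+\<omega>. ennreal (G j \<omega> * exp (l * V j \<omega> - psi)) \<partial>M)"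
      by (subst nn_integral_add[symmetric]) (auto intro!: nn_integral_cong simp: pw)
    moreover have "(\<integral>\<^sup>+\<omega>. ennreal (G j \<omega> * exp (l * V j \<omega> - psi)) \<partial>M)
                   = (\<integral>\<^sup>+\<omega>. ennreal (G j \<omega>) \<partial>M) * (\<integral>\<^sup>+\<omega>. ennreal (exp (l * V j \<omega> - psi)) \<partial>M)"
      by (rule indep_var_nn_mult[OF indGY G_nn]) simp
    moreover have "(\<integral>\<^sup>+\<omega>. ennreal (G j \<omega>) \<partial>M) * (\<integral>\<^sup>+\<omega>. ennreal (exp (l * V j \<omega> - psi)) \<partial>M)
                   \<le> (\<integral>\<^sup>+\<omega>. ennreal (G j \<omega>) \<partial>M)"
      using mult_left_mono[OF Hl[of j], of "\<integral>\<^sup>+\<omega>. ennreal (G j \<omega>) \<partial>M"] by simp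
    ultimately have "ennreal c * emeasure M (E (Suc j)) + (\<integral>\<^sup>+\<omega>. ennreal (G (Suc j) \<omega>) \<partial>M)
          \<le> ennreal c * emeasure M (E j) + (\<integral>\<^sup>+\<omega>. ennreal (G j \<omega>) \<partial>M)"
      by (smt (verit) add.assoc add_left_mono add_right_mono order_trans)
    then show ?case using Suc.IH by order
  qed
  have inc: "incseq E" unfolding incseq_def E_def by auto
  have "(\<Union>j. E j) = {\<omega>\<in>space M. \<exists>i. c \<le> exp (l * (\<Sum>k<i. V k \<omega>) - real i * psi)}"
    unfolding E_def Mf_def by auto
  moreover have "ennreal c * emeasure M (\<Union>j. E j) \<le> 1"
  proof -
    have "ennreal c * emeasure M (\<Union>j. E j) = (SUP j. ennreal c * emeasure M (E j))"
      by (subst SUP_emeasure_incseq[symmetric]) (auto simp: inc SUP_mult_left_ennreal)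
    also have "\<dots> \<le> 1"
      by (rule SUP_least) (rule order_trans[OF add_increasing2[OF zero_le order_refl] claim])
    finally show ?thesis .
  qed
  ultimately have "ennreal c * ennreal (measure M {\<omega>\<in>space M. \<exists>i. c \<le> exp (l * (\<Sum>k<i. V k \<omega>) - real i * psi)}) \<le> 1"
    by (simp add: emeasure_eq_measure)
  then show ?thesis using c by (simp add: ennreal_mult[symmetric] ennreal_le_1)
qed


lemma hoeff_max:
  fixes P :: "'b measure" and Q :: "'a measure" and X :: "nat \<Rightarrow> 'b \<Rightarrow> 'a" and g :: "'a \<Rightarrow> real"
  assumes P: "prob_space P"
    and X_meas: "\<And>i. X i \<in> measurable P Q"
    and X_indep: "prob_space.indep_vars P (\<lambda>_. Q) X UNIV"
    and X_law: "\<And>i. distr P Q (X i) = Q"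
    and gm: "g \<in> borel_measurable Q"
    and gb: "\<And>x. x \<in> space Q \<Longrightarrow> \<alpha> \<le> g x \<and> g x \<le> \<beta>"
    and ab: "\<alpha> < \<beta>"
    and g0: "(\<integral>x. g x \<partial>Q) = 0"
    and eps: "\<epsilon> \<ge> 0" and n: "n \<ge> 1"
  shows "measure P {\<omega>\<in>space P. \<exists>k\<ge>n. real k * \<epsilon> \<le> (\<Sum>i<k. g (X i \<omega>))}
           \<le> exp (- 2 * real n * \<epsilon>\<^sup>2 / (\<beta> - \<alpha>)\<^sup>2)"
proof -
  interpret prob_space P by (rule P)
  show ?thesis
  proof (cases "\<epsilon> = 0")
    case True
    then show ?thesis by simp
  next
    case False
    with eps have e: "\<epsilon> > 0" by simp
    define w where "w = \<beta> - \<alpha>"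
    have w: "w > 0" using ab by (simp add: w_def)
    define l where "l = 4 * \<epsilon> / w\<^sup>2"
    define psi where "psi = l\<^sup>2 * w\<^sup>2 / 8"
    define \<delta> where "\<delta> = 2 * \<epsilon>\<^sup>2 / w\<^sup>2"
    have l: "l > 0" using e w by (simp add: l_def)
    have d: "l * \<epsilon> - psi = \<delta>" using w
      by (simp add: l_def psi_def \<delta>_def field_simps power2_eq_square)
    have dpos: "\<delta> > 0" using e w by (simp add: \<delta>_def)
    define c where "c = exp (real n * \<delta>)"
    have c: "c > 1" using n dpos by (simp add: c_def)
    define V where "V i \<omega> = g (X i \<omega>)" for i \<omega>
    have indV: "indep_vars (\<lambda>_. borel) V UNIV"
      unfolding V_def by (rule indep_vars_compose2[OF X_indep gm])
    have Vm[measurable]: "V i \<in> borel_measurable P" for i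
      unfolding V_def using X_meas gm by measurable
    have Hl: "(\<integral>\<^sup>+\<omega>. ennreal (exp (l * V i \<omega> - psi)) \<partial>P) \<le> 1" for i
    proof -
      interpret ib: interval_bounded_random_variable P "V i" \<alpha> \<beta>
      proof
        show "AE x in P. V i x \<in> {\<alpha>..\<beta>}"
          by (rule AE_I2) (use gb measurable_space[OF X_meas] in \<open>auto simp: V_def\<close>)
      qed simp
      have E0: "expectation (V i) = 0"
        unfolding V_def using integral_distr[OF X_meas gm, of i] X_law[of i] g0 by simp
      have H: "(\<integral>\<^sup>+\<omega>. ennreal (exp (l * V i \<omega>)) \<partial>P) \<le> ennreal (exp (l\<^sup>2 * (\<beta> - \<alpha>)\<^sup>2 / 8))"
        by (rule ib.Hoeffdings_lemma_nn_integral_0[OF l E0])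
      have "(\<integral>\<^sup>+\<omega>. ennreal (exp (l * V i \<omega> - psi)) \<partial>P)
            = (\<integral>\<^sup>+\<omega>. ennreal (exp (- psi)) * ennreal (exp (l * V i \<omega>)) \<partial>P)"
        by (intro nn_integral_cong) (simp add: exp_diff exp_minus ennreal_mult[symmetric] field_simps)
      also have "\<dots> = ennreal (exp (- psi)) * (\<integral>\<^sup>+\<omega>. ennreal (exp (l * V i \<omega>)) \<partial>P)"
        by (rule nn_integral_cmult) measurable
      also have "\<dots> \<le> ennreal (exp (- psi)) * ennreal (exp (l\<^sup>2 * (\<beta> - \<alpha>)\<^sup>2 / 8))"
        by (rule mult_left_mono[OF H]) simp
      also have "\<dots> = 1"
        by (simp add: psi_def w_def ennreal_mult[symmetric] exp_add[symmetric])
      finally show ?thesis .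
    qed
    have main: "c * measure P {\<omega>\<in>space P. \<exists>i. c \<le> exp (l * (\<Sum>k<i. V k \<omega>) - real i * psi)} \<le> 1"
      by (rule ville_sum[OF indV Hl c])
    have sub: "{\<omega>\<in>space P. \<exists>k\<ge>n. real k * \<epsilon> \<le> (\<Sum>i<k. g (X i \<omega>))}
               \<subseteq> {\<omega>\<in>space P. \<exists>i. c \<le> exp (l * (\<Sum>k<i. V k \<omega>) - real i * psi)}"
    proof safe
      fix \<omega> k assume \<omega>: "\<omega> \<in> space P" and k: "n \<le> k" "real k * \<epsilon> \<le> (\<Sum>i<k. g (X i \<omega>))"
      have "real n * \<delta> \<le> real k * \<delta>" using k dpos by simp
      also have "\<dots> = l * (real k * \<epsilon>) - real k * psi" using d by (simp add: algebra_simps flip: d)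
      also have "\<dots> \<le> l * (\<Sum>i<k. V i \<omega>) - real k * psi"
        using k l by (simp add: V_def)
      finally show "\<exists>i. c \<le> exp (l * (\<Sum>k<i. V k \<omega>) - real i * psi)"
        by (intro exI[of _ k]) (simp add: c_def)
    qed
    have "measure P {\<omega>\<in>space P. \<exists>k\<ge>n. real k * \<epsilon> \<le> (\<Sum>i<k. g (X i \<omega>))}
          \<le> measure P {\<omega>\<in>space P. \<exists>i. c \<le> exp (l * (\<Sum>k<i. V k \<omega>) - real i * psi)}"
      by (rule finite_measure_mono[OF sub]) measurable
    also have "\<dots> \<le> 1 / c" using main c by (simp add: field_simps)
    also have "1 / c = exp (- 2 * real n * \<epsilon>\<^sup>2 / (\<beta> - \<alpha>)\<^sup>2)"
      by (simp add: c_def \<delta>_def w_def exp_minus field_simps)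
    finally show ?thesis .
  qed
qed


lemma emp_diff:
  assumes "k \<ge> 1"
  shows "emp_M X h t0 k \<omega> y - emp_M X h t0 k \<omega> t = (\<Sum>i<k. h (X i \<omega>) y - h (X i \<omega>) t) / real k"
  unfolding emp_M_def by (simp add: diff_divide_distrib[symmetric] sum_subtractf[symmetric])

lemma mhat_gt:
  assumes k: "k \<ge> 1" and sm: "smallest_minimizer (emp_M X h t0 k \<omega>) y" and yt: "t < y"
    and cv: "\<And>i. convex_on UNIV (h (X i \<omega>))"
  shows "(\<Sum>i<k. right_deriv (h (X i \<omega>)) t) < 0"
proof -
  let ?M = "emp_M X h t0 k \<omega>"
  have "?M y < ?M t"
  proof (rule ccontr)
    assume "\<not> ?M y < ?M t"
    then have "?M t \<le> ?M y" by simp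
    moreover have "\<forall>z. ?M y \<le> ?M z" using sm unfolding smallest_minimizer_def by blast
    ultimately have "\<forall>z. ?M t \<le> ?M z" using order_trans by blast
    then have "y \<le> t" using sm unfolding smallest_minimizer_def by blast
    then show False using yt by simp
  qed
  then have "(\<Sum>i<k. h (X i \<omega>) y - h (X i \<omega>) t) / real k < 0"
    using emp_diff[OF k, of X h t0 \<omega> y t] by linarith
  then have neg: "(\<Sum>i<k. h (X i \<omega>) y - h (X i \<omega>) t) < 0"
    using k by (simp add: divide_less_0_iff)
  have "(\<Sum>i<k. right_deriv (h (X i \<omega>)) t) \<le> (\<Sum>i<k. (h (X i \<omega>) y - h (X i \<omega>) t) / (y - t))"
    by (rule sum_mono) (rule right_deriv_le_slope[OF cv yt])
  also have "\<dots> = (\<Sum>i<k. h (X i \<omega>) y - h (X i \<omega>) t) / (y - t)"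
    by (simp add: sum_divide_distrib)
  also have "\<dots> < 0" using neg yt by (simp add: divide_less_0_iff)
  finally show ?thesis .
qed

lemma mhat_lt:
  assumes k: "k \<ge> 1" and sm: "smallest_minimizer (emp_M X h t0 k \<omega>) y" and yt: "y < t"
    and cv: "\<And>i. convex_on UNIV (h (X i \<omega>))"
  shows "(\<Sum>i<k. right_deriv (h (X i \<omega>)) t) \<ge> 0"
proof -
  let ?M = "emp_M X h t0 k \<omega>"
  have "?M y \<le> ?M t" using sm unfolding smallest_minimizer_def by blast
  then have "0 \<le> (\<Sum>i<k. h (X i \<omega>) t - h (X i \<omega>) y) / real k"
    using emp_diff[OF k, of X h t0 \<omega> t y] by linarith
  then have pos: "(\<Sum>i<k. h (X i \<omega>) t - h (X i \<omega>) y) \<ge> 0"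
    using k by (simp add: zero_le_divide_iff)
  have "0 \<le> (\<Sum>i<k. h (X i \<omega>) t - h (X i \<omega>) y) / (t - y)"
    using pos yt by simp
  also have "\<dots> = (\<Sum>i<k. (h (X i \<omega>) t - h (X i \<omega>) y) / (t - y))"
    by (simp add: sum_divide_distrib)
  also have "\<dots> \<le> (\<Sum>i<k. right_deriv (h (X i \<omega>)) t)"
    by (rule sum_mono) (rule slope_le_right_deriv[OF cv yt])
  finally show ?thesis .
qed


lemma (in prob_space) measure_mono_AE':
  assumes "AE x in M. x \<in> A \<longrightarrow> x \<in> B" "B \<in> events"
  shows "measure M A \<le> measure M B"
  using emeasure_mono_AE[OF assms] by (simp add: emeasure_eq_measure)

locale setting =
  fixes Q :: "'a measure" and P :: "'b measure"
    and h :: "'a \<Rightarrow> real \<Rightarrow> real" and t0 m :: real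
    and X :: "nat \<Rightarrow> 'b \<Rightarrow> 'a" and mhat :: "nat \<Rightarrow> 'b \<Rightarrow> real"
    and a b :: "real \<Rightarrow> real"
  assumes Q: "prob_space Q" and P: "prob_space P"
    and h_meas: "\<And>t. (\<lambda>x. h x t) \<in> borel_measurable Q"
    and h_convex: "\<And>x. x \<in> space Q \<Longrightarrow> convex_on UNIV (h x)"
    and int_Dp: "\<And>t. integrable Q (\<lambda>x. right_deriv (h x) t)"
    and X_meas: "\<And>i. X i \<in> measurable P Q"
    and X_indep: "prob_space.indep_vars P (\<lambda>_. Q) X UNIV"
    and X_law: "\<And>i. distr P Q (X i) = Q"
    and mhat_min: "\<And>n \<omega>. n \<ge> 1 \<Longrightarrow> \<omega> \<in> space P \<Longrightarrow>
                     smallest_minimizer (emp_M X h t0 n \<omega>) (mhat n \<omega>)"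
    and mhat_meas: "\<And>n. mhat n \<in> borel_measurable P"
begin

sublocale cvxh Q h t0
  by unfold_locales (fact h_meas h_convex int_Dp)+

lemma clamp:
  assumes ab: "\<alpha> < \<beta>"
    and AEb: "AE \<omega> in P. \<alpha> \<le> right_deriv (h (X 0 \<omega>)) t \<and> right_deriv (h (X 0 \<omega>)) t \<le> \<beta>"
  obtains fc where "fc \<in> borel_measurable Q" "\<And>x. x \<in> space Q \<Longrightarrow> \<alpha> \<le> fc x \<and> fc x \<le> \<beta>"
    "(\<integral>x. fc x \<partial>Q) = right_deriv (pop_M Q h t0) t"
    "AE \<omega> in P. \<forall>i. fc (X i \<omega>) = right_deriv (h (X i \<omega>)) t"
proof
  define f where "f x = right_deriv (h x) t" for x
  have fm[measurable]: "f \<in> borel_measurable Q" unfolding f_def by (rule Dp_meas)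
  define fc where "fc x = max \<alpha> (min \<beta> (f x))" for x
  show fcm: "fc \<in> borel_measurable Q" unfolding fc_def by measurable
  show "\<alpha> \<le> fc x \<and> fc x \<le> \<beta>" for x using ab unfolding fc_def by auto
  have "AE x in distr P Q (X 0). \<alpha> \<le> f x \<and> f x \<le> \<beta>"
  proof -
    have "{x\<in>space Q. \<alpha> \<le> f x \<and> f x \<le> \<beta>} \<in> sets Q" by measurable
    from AE_distr_iff[OF X_meas this] show ?thesis using AEb by (simp add: f_def)
  qed
  then have AEQ: "AE x in Q. \<alpha> \<le> f x \<and> f x \<le> \<beta>" by (simp only: X_law)
  then have AEfc: "AE x in Q. fc x = f x" by eventually_elim (simp add: fc_def)
  have "(\<integral>x. fc x \<partial>Q) = (\<integral>x. f x \<partial>Q)"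
    by (rule integral_cong_AE[OF fcm fm AEfc])
  then show "(\<integral>x. fc x \<partial>Q) = right_deriv (pop_M Q h t0) t"
    using M_rderiv by (simp add: f_def)
  have "AE \<omega> in P. fc (X i \<omega>) = right_deriv (h (X i \<omega>)) t" for i
  proof -
    have "AE x in distr P Q (X i). fc x = f x" using AEfc by (simp only: X_law)
    then show ?thesis
    proof -
      note fcm[measurable]
      have "{x\<in>space Q. fc x = f x} \<in> sets Q" by measurable
      from AE_distr_iff[OF X_meas this] show ?thesis using \<open>AE x in distr P Q (X i). fc x = f x\<close>
        by (simp add: f_def)
    qed
  qed
  then show "AE \<omega> in P. \<forall>i. fc (X i \<omega>) = right_deriv (h (X i \<omega>)) t"
    by (simp add: AE_all_countable)
qed

lemma fc_facts:
  fixes fc :: "'a \<Rightarrow> real" and \<alpha> \<beta> \<mu> :: real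
  assumes fcm: "fc \<in> borel_measurable Q" and fcb: "\<And>x. x \<in> space Q \<Longrightarrow> \<alpha> \<le> fc x \<and> fc x \<le> \<beta>"
  shows "integrable Q fc" "(\<integral>x. \<mu> - fc x \<partial>Q) = \<mu> - (\<integral>x. fc x \<partial>Q)"
    "(\<integral>x. fc x - \<mu> \<partial>Q) = (\<integral>x. fc x \<partial>Q) - \<mu>"
proof -
  interpret Qp: prob_space Q by (rule Q)
  show i: "integrable Q fc"
  proof (rule Qp.integrable_const_bound[where B="\<bar>\<alpha>\<bar> + \<bar>\<beta>\<bar>"])
    show "AE x in Q. norm (fc x) \<le> \<bar>\<alpha>\<bar> + \<bar>\<beta>\<bar>"
    proof (rule AE_I2)
      fix x assume "x \<in> space Q"
      from fcb[OF this] show "norm (fc x) \<le> \<bar>\<alpha>\<bar> + \<bar>\<beta>\<bar>" by (simp add: abs_le_iff) (smt (verit))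
    qed
  qed (rule fcm)
  show "(\<integral>x. \<mu> - fc x \<partial>Q) = \<mu> - (\<integral>x. fc x \<partial>Q)"
    using Bochner_Integration.integral_diff[OF Qp.integrable_const i, of \<mu>] by (simp add: Qp.prob_space)
  show "(\<integral>x. fc x - \<mu> \<partial>Q) = (\<integral>x. fc x \<partial>Q) - \<mu>"
    using Bochner_Integration.integral_diff[OF i Qp.integrable_const, of \<mu>] by (simp add: Qp.prob_space)
qed

lemma cvX: "\<omega> \<in> space P \<Longrightarrow> convex_on UNIV (h (X i \<omega>))"
  using h_convex measurable_space[OF X_meas] by blast

lemma bound_right:
  assumes x: "x > 0" and ab: "\<alpha> < \<beta>"
    and AEb: "AE \<omega> in P. \<alpha> \<le> right_deriv (h (X 0 \<omega>)) (m + x) \<and> right_deriv (h (X 0 \<omega>)) (m + x) \<le> \<beta>"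
    and Dnn: "right_deriv (pop_M Q h t0) (m + x) \<ge> 0" and n: "n \<ge> 1"
  shows "measure P {\<omega>\<in>space P. \<exists>k\<ge>n. mhat k \<omega> - m > x}
          \<le> exp (- 2 * real n * (right_deriv (pop_M Q h t0) (m + x))\<^sup>2 / (\<beta> - \<alpha>)\<^sup>2)"
proof -
  interpret Pp: prob_space P by (rule P)
  define \<mu> where "\<mu> = right_deriv (pop_M Q h t0) (m + x)"
  obtain fc where fcm: "fc \<in> borel_measurable Q" and fcb: "\<And>x. x \<in> space Q \<Longrightarrow> \<alpha> \<le> fc x \<and> fc x \<le> \<beta>"
    and fci: "(\<integral>x. fc x \<partial>Q) = \<mu>" and fcae: "AE \<omega> in P. \<forall>i. fc (X i \<omega>) = right_deriv (h (X i \<omega>)) (m + x)"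
    using clamp[OF ab AEb] unfolding \<mu>_def by blast
  define g where "g y = \<mu> - fc y" for y
  have gm: "g \<in> borel_measurable Q" unfolding g_def using fcm by measurable
  have gb: "\<And>y. y \<in> space Q \<Longrightarrow> \<mu> - \<beta> \<le> g y \<and> g y \<le> \<mu> - \<alpha>"
    using fcb unfolding g_def by force
  have g0: "(\<integral>y. g y \<partial>Q) = 0" unfolding g_def using fc_facts(2)[OF fcm fcb, of \<mu>] fci by simp
  have H: "measure P {\<omega>\<in>space P. \<exists>k\<ge>n. real k * \<mu> \<le> (\<Sum>i<k. g (X i \<omega>))}
           \<le> exp (- 2 * real n * \<mu>\<^sup>2 / ((\<mu> - \<alpha>) - (\<mu> - \<beta>))\<^sup>2)"
    by (rule hoeff_max[OF P X_meas X_indep X_law gm gb _ g0 _ n]) (use ab Dnn \<mu>_def in auto)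
  have "measure P {\<omega>\<in>space P. \<exists>k\<ge>n. mhat k \<omega> - m > x}
        \<le> measure P {\<omega>\<in>space P. \<exists>k\<ge>n. real k * \<mu> \<le> (\<Sum>i<k. g (X i \<omega>))}"
  proof (rule Pp.measure_mono_AE')
    note gm[measurable]
    show "{\<omega>\<in>space P. \<exists>k\<ge>n. real k * \<mu> \<le> (\<Sum>i<k. g (X i \<omega>))} \<in> sets P"
      using X_meas by measurable
    show "AE \<omega> in P. \<omega> \<in> {\<omega>\<in>space P. \<exists>k\<ge>n. mhat k \<omega> - m > x} \<longrightarrow>
                 \<omega> \<in> {\<omega>\<in>space P. \<exists>k\<ge>n. real k * \<mu> \<le> (\<Sum>i<k. g (X i \<omega>))}"
      using fcae
    proof eventually_elim
      case (elim \<omega>)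
      show ?case
      proof safe
        fix k assume \<omega>: "\<omega> \<in> space P" and k: "n \<le> k" "x < mhat k \<omega> - m"
        have k1: "k \<ge> 1" using k n by simp
        have "(\<Sum>i<k. right_deriv (h (X i \<omega>)) (m + x)) < 0"
          by (rule mhat_gt[OF k1 mhat_min[OF k1 \<omega>]]) (use k cvX[OF \<omega>] in auto)
        then have "real k * \<mu> \<le> (\<Sum>i<k. g (X i \<omega>))"
          using elim by (simp add: g_def sum_subtractf)
        then show "\<exists>k\<ge>n. real k * \<mu> \<le> (\<Sum>i<k. g (X i \<omega>))" using k by blast
      qed
    qed
  qed
  also have "\<dots> \<le> exp (- 2 * real n * \<mu>\<^sup>2 / (\<beta> - \<alpha>)\<^sup>2)" using H by simp
  finally show ?thesis unfolding \<mu>_def .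
qed

lemma bound_left:
  assumes x: "x > 0" and ab: "\<alpha> < \<beta>"
    and AEb: "AE \<omega> in P. \<alpha> \<le> right_deriv (h (X 0 \<omega>)) (m - x) \<and> right_deriv (h (X 0 \<omega>)) (m - x) \<le> \<beta>"
    and Dnp: "right_deriv (pop_M Q h t0) (m - x) \<le> 0" and n: "n \<ge> 1"
  shows "measure P {\<omega>\<in>space P. \<exists>k\<ge>n. mhat k \<omega> - m < - x}
          \<le> exp (- 2 * real n * (right_deriv (pop_M Q h t0) (m - x))\<^sup>2 / (\<beta> - \<alpha>)\<^sup>2)"
proof -
  interpret Pp: prob_space P by (rule P)
  define \<mu> where "\<mu> = right_deriv (pop_M Q h t0) (m - x)"
  obtain fc where fcm: "fc \<in> borel_measurable Q" and fcb: "\<And>x. x \<in> space Q \<Longrightarrow> \<alpha> \<le> fc x \<and> fc x \<le> \<beta>"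
    and fci: "(\<integral>x. fc x \<partial>Q) = \<mu>" and fcae: "AE \<omega> in P. \<forall>i. fc (X i \<omega>) = right_deriv (h (X i \<omega>)) (m - x)"
    using clamp[OF ab AEb] unfolding \<mu>_def by blast
  define g where "g y = fc y - \<mu>" for y
  have gm: "g \<in> borel_measurable Q" unfolding g_def using fcm by measurable
  have gb: "\<And>y. y \<in> space Q \<Longrightarrow> \<alpha> - \<mu> \<le> g y \<and> g y \<le> \<beta> - \<mu>"
    using fcb unfolding g_def by force
  have g0: "(\<integral>y. g y \<partial>Q) = 0" unfolding g_def using fc_facts(3)[OF fcm fcb, of \<mu>] fci by simp
  have H: "measure P {\<omega>\<in>space P. \<exists>k\<ge>n. real k * (- \<mu>) \<le> (\<Sum>i<k. g (X i \<omega>))}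
           \<le> exp (- 2 * real n * (- \<mu>)\<^sup>2 / ((\<beta> - \<mu>) - (\<alpha> - \<mu>))\<^sup>2)"
    by (rule hoeff_max[OF P X_meas X_indep X_law gm gb _ g0 _ n]) (use ab Dnp \<mu>_def in auto)
  have "measure P {\<omega>\<in>space P. \<exists>k\<ge>n. mhat k \<omega> - m < - x}
        \<le> measure P {\<omega>\<in>space P. \<exists>k\<ge>n. real k * (- \<mu>) \<le> (\<Sum>i<k. g (X i \<omega>))}"
  proof (rule Pp.measure_mono_AE')
    note gm[measurable]
    show "{\<omega>\<in>space P. \<exists>k\<ge>n. real k * (- \<mu>) \<le> (\<Sum>i<k. g (X i \<omega>))} \<in> sets P"
      using X_meas by measurable
    show "AE \<omega> in P. \<omega> \<in> {\<omega>\<in>space P. \<exists>k\<ge>n. mhat k \<omega> - m < - x} \<longrightarrow>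
                 \<omega> \<in> {\<omega>\<in>space P. \<exists>k\<ge>n. real k * (- \<mu>) \<le> (\<Sum>i<k. g (X i \<omega>))}"
      using fcae
    proof eventually_elim
      case (elim \<omega>)
      show ?case
      proof safe
        fix k assume \<omega>: "\<omega> \<in> space P" and k: "n \<le> k" "mhat k \<omega> - m < - x"
        have k1: "k \<ge> 1" using k n by simp
        have "(\<Sum>i<k. right_deriv (h (X i \<omega>)) (m - x)) \<ge> 0"
          by (rule mhat_lt[OF k1 mhat_min[OF k1 \<omega>]]) (use k cvX[OF \<omega>] in auto)
        then have "real k * (- \<mu>) \<le> (\<Sum>i<k. g (X i \<omega>))"
          using elim by (simp add: g_def sum_subtractf)
        then show "\<exists>k\<ge>n. real k * (- \<mu>) \<le> (\<Sum>i<k. g (X i \<omega>))" using k by blast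
      qed
    qed
  qed
  also have "\<dots> \<le> exp (- 2 * real n * \<mu>\<^sup>2 / (\<beta> - \<alpha>)\<^sup>2)" using H by simp
  finally show ?thesis unfolding \<mu>_def .
qed

end


lemma exp_cmp:
  fixes d D' w A :: real
  assumes "0 \<le> d" "d \<le> \<bar>D'\<bar>" "0 < w" "w \<le> A"
  shows "exp (- 2 * real n * D'\<^sup>2 / w\<^sup>2) \<le> exp (- 2 * real n * d\<^sup>2 / A\<^sup>2)"
proof -
  have "d\<^sup>2 \<le> \<bar>D'\<bar>\<^sup>2" by (rule power_mono) (use assms in auto)
  then have d2: "d\<^sup>2 \<le> D'\<^sup>2" by simp
  have w2: "w\<^sup>2 \<le> A\<^sup>2" by (rule power_mono) (use assms in auto)
  have "d\<^sup>2 / A\<^sup>2 \<le> D'\<^sup>2 / w\<^sup>2"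
    by (rule frac_le) (use d2 w2 assms in auto)
  then have "2 * real n * (d\<^sup>2 / A\<^sup>2) \<le> 2 * real n * (D'\<^sup>2 / w\<^sup>2)"
    by (rule mult_left_mono) simp
  moreover have "- 2 * real n * D'\<^sup>2 / w\<^sup>2 = - (2 * real n * (D'\<^sup>2 / w\<^sup>2))" by simp
  moreover have "- 2 * real n * d\<^sup>2 / A\<^sup>2 = - (2 * real n * (d\<^sup>2 / A\<^sup>2))" by simp
  ultimately show ?thesis by simp
qed

theorem theorem1:
  fixes Q :: "'a measure" and P :: "'b measure"
    and h :: "'a \<Rightarrow> real \<Rightarrow> real" and t0 m :: real
    and X :: "nat \<Rightarrow> 'b \<Rightarrow> 'a" and mhat :: "nat \<Rightarrow> 'b \<Rightarrow> real"
    and a b :: "real \<Rightarrow> real"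
  assumes Q: "prob_space Q" and P: "prob_space P"
    and h_meas: "\<And>t. (\<lambda>x. h x t) \<in> borel_measurable Q"
    and h_convex: "\<And>x. x \<in> space Q \<Longrightarrow> convex_on UNIV (h x)"
    and int_Dp: "\<And>t. integrable Q (\<lambda>x. right_deriv (h x) t)"
    and int_Dm: "\<And>t. integrable Q (\<lambda>x. left_deriv (h x) t)"
    and X_meas: "\<And>i. X i \<in> measurable P Q"
    and X_indep: "prob_space.indep_vars P (\<lambda>_. Q) X UNIV"
    and X_law: "\<And>i. distr P Q (X i) = Q"
    and mhat_min: "\<And>n \<omega>. n \<ge> 1 \<Longrightarrow> \<omega> \<in> space P \<Longrightarrow>
                     smallest_minimizer (emp_M X h t0 n \<omega>) (mhat n \<omega>)"
    and mhat_meas: "\<And>n. mhat n \<in> borel_measurable P"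
    and m_min: "left_deriv (pop_M Q h t0) m \<le> 0" "0 \<le> right_deriv (pop_M Q h t0) m"
    and B: "\<And>x. x \<noteq> 0 \<Longrightarrow> a x < b x \<and>
              (AE \<omega> in P. a x \<le> right_deriv (h (X 0 \<omega>)) (m + x)
                           \<and> right_deriv (h (X 0 \<omega>)) (m + x) \<le> b x)"
  shows "(\<forall>n::nat. \<forall>x::real. n \<ge> 1 \<longrightarrow> x > 0 \<longrightarrow>
           measure P {\<omega> \<in> space P. \<exists>k\<ge>n. mhat k \<omega> - m > x}
             \<le> exp (- 2 * real n * (right_deriv (pop_M Q h t0) (m + x))\<^sup>2 / (b x - a x)\<^sup>2)
         \<and> measure P {\<omega> \<in> space P. \<exists>k\<ge>n. mhat k \<omega> - m < - x}
             \<le> exp (- 2 * real n * (right_deriv (pop_M Q h t0) (m - x))\<^sup>2 / (b (-x) - a (-x))\<^sup>2)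
         \<and> min (right_deriv (pop_M Q h t0) (m + x)) (- right_deriv (pop_M Q h t0) (m - x)) \<ge> 0
         \<and> measure P {\<omega> \<in> space P. \<exists>k\<ge>n. \<bar>mhat k \<omega> - m\<bar> > x}
             \<le> 2 * exp (- 2 * real n
                  * (min (right_deriv (pop_M Q h t0) (m + x)) (- right_deriv (pop_M Q h t0) (m - x)))\<^sup>2
                  / (max (b x - a x) (b (-x) - a (-x)))\<^sup>2))
       \<and> ((\<forall>t. (\<forall>s. pop_M Q h t0 t \<le> pop_M Q h t0 s) \<longleftrightarrow> t = m) \<longrightarrow>
            (\<forall>x>0. min (right_deriv (pop_M Q h t0) (m + x)) (- right_deriv (pop_M Q h t0) (m - x)) > 0
                  \<and> right_deriv (pop_M Q h t0) (m + x) > 0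
                  \<and> - right_deriv (pop_M Q h t0) (m - x) > 0))"
proof -
  interpret S: setting Q P h t0 m X mhat
    by (rule setting.intro) (fact Q P h_meas h_convex int_Dp X_meas X_indep X_law mhat_min mhat_meas)+
  interpret Pp: prob_space P by (rule P)
  define M where "M = pop_M Q h t0"
  have Mc: "convex_on UNIV M" unfolding M_def by (rule S.M_convex)
  have Dp: "right_deriv M (m + x) \<ge> 0" if x: "x > 0" for x
  proof -
    have "right_deriv M m \<le> (M (m + x) - M m) / ((m + x) - m)"
      by (rule right_deriv_le_slope[OF Mc]) (use x in simp)
    also have "\<dots> \<le> right_deriv M (m + x)"
      by (rule slope_le_right_deriv[OF Mc]) (use x in simp)
    finally show ?thesis using m_min(2) unfolding M_def by simp
  qed
  have Dm: "right_deriv M (m - x) \<le> 0" if x: "x > 0" for x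
  proof -
    have "right_deriv M (m - x) \<le> (M m - M (m - x)) / (m - (m - x))"
      by (rule right_deriv_le_slope[OF Mc]) (use x in simp)
    also have "\<dots> \<le> left_deriv M m"
      by (rule slope_le_left_deriv[OF Mc]) (use x in simp)
    finally show ?thesis using m_min(1) unfolding M_def by simp
  qed
  have part1: "measure P {\<omega> \<in> space P. \<exists>k\<ge>n. mhat k \<omega> - m > x}
             \<le> exp (- 2 * real n * (right_deriv M (m + x))\<^sup>2 / (b x - a x)\<^sup>2)
         \<and> measure P {\<omega> \<in> space P. \<exists>k\<ge>n. mhat k \<omega> - m < - x}
             \<le> exp (- 2 * real n * (right_deriv M (m - x))\<^sup>2 / (b (-x) - a (-x))\<^sup>2)
         \<and> min (right_deriv M (m + x)) (- right_deriv M (m - x)) \<ge> 0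
         \<and> measure P {\<omega> \<in> space P. \<exists>k\<ge>n. \<bar>mhat k \<omega> - m\<bar> > x}
             \<le> 2 * exp (- 2 * real n
                  * (min (right_deriv M (m + x)) (- right_deriv M (m - x)))\<^sup>2
                  / (max (b x - a x) (b (-x) - a (-x)))\<^sup>2)"
    if n: "n \<ge> 1" and x: "x > 0" for n x
  proof -
    have B1: "a x < b x" "AE \<omega> in P. a x \<le> right_deriv (h (X 0 \<omega>)) (m + x)
                           \<and> right_deriv (h (X 0 \<omega>)) (m + x) \<le> b x"
      using B[of x] x by auto
    have B2: "a (-x) < b (-x)" "AE \<omega> in P. a (-x) \<le> right_deriv (h (X 0 \<omega>)) (m - x)
                           \<and> right_deriv (h (X 0 \<omega>)) (m - x) \<le> b (-x)"
      using B[of "-x"] x by auto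
    have r1: "measure P {\<omega> \<in> space P. \<exists>k\<ge>n. mhat k \<omega> - m > x}
             \<le> exp (- 2 * real n * (right_deriv M (m + x))\<^sup>2 / (b x - a x)\<^sup>2)"
      unfolding M_def by (rule S.bound_right[OF x B1 _ n]) (use Dp[OF x] in \<open>simp add: M_def\<close>)
    have r2: "measure P {\<omega> \<in> space P. \<exists>k\<ge>n. mhat k \<omega> - m < - x}
             \<le> exp (- 2 * real n * (right_deriv M (m - x))\<^sup>2 / (b (-x) - a (-x))\<^sup>2)"
      unfolding M_def by (rule S.bound_left[OF x B2 _ n]) (use Dm[OF x] in \<open>simp add: M_def\<close>)
    define d where "d = min (right_deriv M (m + x)) (- right_deriv M (m - x))"
    define A where "A = max (b x - a x) (b (-x) - a (-x))"
    have d0: "d \<ge> 0" unfolding d_def using Dp[OF x] Dm[OF x] by simp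
    note mm[measurable] = mhat_meas
    have "measure P {\<omega> \<in> space P. \<exists>k\<ge>n. \<bar>mhat k \<omega> - m\<bar> > x}
          \<le> measure P ({\<omega> \<in> space P. \<exists>k\<ge>n. mhat k \<omega> - m > x} \<union> {\<omega> \<in> space P. \<exists>k\<ge>n. mhat k \<omega> - m < - x})"
    proof (rule Pp.finite_measure_mono)
      show "{\<omega> \<in> space P. \<exists>k\<ge>n. \<bar>mhat k \<omega> - m\<bar> > x}
          \<subseteq> {\<omega> \<in> space P. \<exists>k\<ge>n. mhat k \<omega> - m > x} \<union> {\<omega> \<in> space P. \<exists>k\<ge>n. mhat k \<omega> - m < - x}"
      proof
        fix \<omega> assume "\<omega> \<in> {\<omega> \<in> space P. \<exists>k\<ge>n. \<bar>mhat k \<omega> - m\<bar> > x}"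
        then obtain k where k: "\<omega> \<in> space P" "k \<ge> n" "\<bar>mhat k \<omega> - m\<bar> > x" by blast
        then have "mhat k \<omega> - m > x \<or> mhat k \<omega> - m < - x" by linarith
        then show "\<omega> \<in> {\<omega> \<in> space P. \<exists>k\<ge>n. mhat k \<omega> - m > x} \<union> {\<omega> \<in> space P. \<exists>k\<ge>n. mhat k \<omega> - m < - x}"
          using k by blast
      qed
    qed measurable
    also have "\<dots> \<le> measure P {\<omega> \<in> space P. \<exists>k\<ge>n. mhat k \<omega> - m > x} + measure P {\<omega> \<in> space P. \<exists>k\<ge>n. mhat k \<omega> - m < - x}"
    proof (rule measure_subadditive)
      show "{\<omega> \<in> space P. \<exists>k\<ge>n. mhat k \<omega> - m > x} \<in> sets P" by measurable
      show "{\<omega> \<in> space P. \<exists>k\<ge>n. mhat k \<omega> - m < - x} \<in> sets P" by measurable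
    qed (simp_all add: Pp.emeasure_eq_measure)
    also have "\<dots> \<le> exp (- 2 * real n * d\<^sup>2 / A\<^sup>2) + exp (- 2 * real n * d\<^sup>2 / A\<^sup>2)"
    proof (rule add_mono)
      show "measure P {\<omega> \<in> space P. \<exists>k\<ge>n. mhat k \<omega> - m > x} \<le> exp (- 2 * real n * d\<^sup>2 / A\<^sup>2)"
      proof -
        have "exp (- 2 * real n * (right_deriv M (m + x))\<^sup>2 / (b x - a x)\<^sup>2) \<le> exp (- 2 * real n * d\<^sup>2 / A\<^sup>2)"
          by (rule exp_cmp[OF d0]) (use B1(1) Dp[OF x] in \<open>auto simp: d_def A_def\<close>)
        then show ?thesis using r1 by linarith
      qed
      show "measure P {\<omega> \<in> space P. \<exists>k\<ge>n. mhat k \<omega> - m < - x} \<le> exp (- 2 * real n * d\<^sup>2 / A\<^sup>2)"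
      proof -
        have "exp (- 2 * real n * (right_deriv M (m - x))\<^sup>2 / (b (-x) - a (-x))\<^sup>2) \<le> exp (- 2 * real n * d\<^sup>2 / A\<^sup>2)"
          by (rule exp_cmp[OF d0]) (use B2(1) Dm[OF x] in \<open>auto simp: d_def A_def\<close>)
        then show ?thesis using r2 by linarith
      qed
    qed
    finally show ?thesis using r1 r2 d0 unfolding d_def A_def by simp
  qed
  have part2: "min (right_deriv M (m + x)) (- right_deriv M (m - x)) > 0
                  \<and> right_deriv M (m + x) > 0 \<and> - right_deriv M (m - x) > 0"
    if U: "\<forall>t. (\<forall>s. M t \<le> M s) \<longleftrightarrow> t = m" and x: "x > 0" for x
  proof -
    have mmin: "\<forall>s. M m \<le> M s" using U by blast
    have a1: "right_deriv M (m + x) > 0"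
    proof (rule ccontr)
      assume "\<not> right_deriv M (m + x) > 0"
      moreover have "(M (m + x) - M m) / ((m + x) - m) \<le> right_deriv M (m + x)"
        by (rule slope_le_right_deriv[OF Mc]) (use x in simp)
      ultimately have "(M (m + x) - M m) / x \<le> 0" by simp
      then have "M (m + x) \<le> M m" using x by (simp add: divide_le_0_iff)
      then have "\<forall>s. M (m + x) \<le> M s" using mmin order_trans by blast
      then have "m + x = m" using U by blast
      then show False using x by simp
    qed
    have a2: "- right_deriv M (m - x) > 0"
    proof (rule ccontr)
      assume "\<not> - right_deriv M (m - x) > 0"
      moreover have "right_deriv M (m - x) \<le> (M m - M (m - x)) / (m - (m - x))"
        by (rule right_deriv_le_slope[OF Mc]) (use x in simp)
      ultimately have "0 \<le> (M m - M (m - x)) / x" by simp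
      then have "M (m - x) \<le> M m" using x by (simp add: zero_le_divide_iff)
      then have "\<forall>s. M (m - x) \<le> M s" using mmin order_trans by blast
      then have "m - x = m" using U by blast
      then show False using x by simp
    qed
    show ?thesis using a1 a2 by simp
  qed
  show ?thesis using part1 part2 unfolding M_def by blast
qed


end
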